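(* Let $F\colon\mathbb{R}^n\to\mathbb{R}^n$ be a polynomial map, let $g_1,\dots,g_r,h_1,\dots,h_s$ be real polynomials on $\mathbb{R}^n$ with $\Omega:=\{x: g_i(x)\le0\ \forall i,\ h_j(x)=0\ \forall j\}$ nonempty, fix $\rho>0$, let $\phi(x,y):=\langle F(x),x-y\rangle-\frac{\rho}{2}\|x-y\|^2$, $\psi(x):=\sup_{y\in\Omega}\phi(x,y)$, and $\Omega(x):=\{y\in\Omega:\psi(x)=\phi(x,y)\}$. Assume (MFCQ) holds on $\Omega$. Let $x\in\mathbb{R}^n$. Then for each $y\in\Omega(x)$, $$\hat\partial(-\psi)(x)\subset\{v\in\mathbb{R}^n: (v,0)\in-\nabla\phi(x,y)+\{0\}\times N(\Omega,y)\},$$ where $\nabla\phi(x,y)\in\mathbb{R}^n\times\mathbb{R}^n$ is the full gradient of $\phi$.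
   Context: $\hat\partial f(x)$ is the Fréchet subdifferential: $\{v:\liminf_{h\to0,h\ne0}\frac{f(x+h)-f(x)-\langle v,h\rangle}{\|h\|}\ge0\}$. For $y\in\Omega$, $N(\Omega,y):=\{\sum_{i=1}^r\mu_i\nabla g_i(y)+\sum_{j=1}^s\kappa_j\nabla h_j(y): \mu_i,\kappa_j\in\mathbb{R},\ \mu_i\ge0,\ \mu_i g_i(y)=0\}$. (MFCQ) holds on $\Omega$ means: for every $x\in\Omega$, the vectors $\nabla h_j(x)$ are linearly independent and there exists $v$ with $\langle\nabla g_i(x),v\rangle<0$ for all $i$ with $g_i(x)=0$ and $\langle\nabla h_j(x),v\rangle=0$ for all $j$. *)

theory Defs
  imports "HOL-Analysis.Analysis"
begin

inductive real_poly_fun :: "(real ^ 'n \<Rightarrow> real) \<Rightarrow> bool" where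
  const: "real_poly_fun (\<lambda>x. c)"
| coord: "real_poly_fun (\<lambda>x. x $ i)"
| add: "real_poly_fun p \<Longrightarrow> real_poly_fun q \<Longrightarrow> real_poly_fun (\<lambda>x. p x + q x)"
| mult: "real_poly_fun p \<Longrightarrow> real_poly_fun q \<Longrightarrow> real_poly_fun (\<lambda>x. p x * q x)"

definition grad :: "('a::real_inner \<Rightarrow> real) \<Rightarrow> 'a \<Rightarrow> 'a" where
  "grad f z = (SOME v. (f has_derivative (\<lambda>h. inner v h)) (at z))"

definition fsubdiff :: "('a::real_inner \<Rightarrow> real) \<Rightarrow> 'a \<Rightarrow> 'a set"
  where "fsubdiff f x =
    {v. Liminf (at 0) (\<lambda>h. ereal ((f (x + h) - f x - inner v h) / norm h)) \<ge> 0}"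

definition feas_set :: "nat \<Rightarrow> nat \<Rightarrow> (nat \<Rightarrow> 'a \<Rightarrow> real) \<Rightarrow> (nat \<Rightarrow> 'a \<Rightarrow> real) \<Rightarrow> 'a set" where
  "feas_set r s g h = {x. (\<forall>i<r. g i x \<le> 0) \<and> (\<forall>j<s. h j x = 0)}"

definition normal_cone :: "nat \<Rightarrow> nat \<Rightarrow> (nat \<Rightarrow> 'a::real_inner \<Rightarrow> real) \<Rightarrow> (nat \<Rightarrow> 'a \<Rightarrow> real) \<Rightarrow> 'a \<Rightarrow> 'a set" where
  "normal_cone r s g h y =
    {(\<Sum>i<r. \<mu> i *\<^sub>R grad (g i) y) + (\<Sum>j<s. \<kappa> j *\<^sub>R grad (h j) y) | \<mu> \<kappa>.
        (\<forall>i<r. \<mu> i \<ge> 0 \<and> \<mu> i * g i y = 0)}"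

definition MFCQ :: "nat \<Rightarrow> nat \<Rightarrow> (nat \<Rightarrow> 'a::real_inner \<Rightarrow> real) \<Rightarrow> (nat \<Rightarrow> 'a \<Rightarrow> real) \<Rightarrow> bool" where
  "MFCQ r s g h \<longleftrightarrow> (\<forall>x \<in> feas_set r s g h.
     (\<forall>c. (\<Sum>j<s. c j *\<^sub>R grad (h j) x) = 0 \<longrightarrow> (\<forall>j<s. c j = 0)) \<and>
     (\<exists>v. (\<forall>i<r. g i x = 0 \<longrightarrow> inner (grad (g i) x) v < 0) \<and>
          (\<forall>j<s. inner (grad (h j) x) v = 0)))"

end

theory Submission
  imports Defs
begin

lemma poly_grad:
  fixes p :: "real ^ 'n \<Rightarrow> real"
  assumes "real_poly_fun p"
  shows "\<exists>G. continuous_on UNIV G \<and> (\<forall>z. (p has_derivative (\<lambda>k. G z \<bullet> k)) (at z))"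
  using assms
proof induction
  case (const c)
  show ?case by (rule exI[of _ "\<lambda>z. 0"]) (auto intro!: derivative_eq_intros)
next
  case (coord i)
  show ?case
    by (rule exI[of _ "\<lambda>z. axis i 1"])
       (auto intro!: derivative_eq_intros simp: cart_eq_inner_axis inner_commute)
next
  case (add p q)
  then obtain Gp Gq where p: "continuous_on UNIV Gp" "\<And>z. (p has_derivative (\<lambda>k. Gp z \<bullet> k)) (at z)"
    and q: "continuous_on UNIV Gq" "\<And>z. (q has_derivative (\<lambda>k. Gq z \<bullet> k)) (at z)" by blast
  show ?case
    by (rule exI[of _ "\<lambda>z. Gp z + Gq z"])
       (auto intro!: derivative_eq_intros p q continuous_intros simp: inner_add_left)
next
  case (mult p q)
  then obtain Gp Gq where p: "continuous_on UNIV Gp" "\<And>z. (p has_derivative (\<lambda>k. Gp z \<bullet> k)) (at z)"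
    and q: "continuous_on UNIV Gq" "\<And>z. (q has_derivative (\<lambda>k. Gq z \<bullet> k)) (at z)" by blast
  have cp: "continuous_on UNIV p" using p(2)
    by (meson continuous_at_imp_continuous_on has_derivative_continuous)
  have cq: "continuous_on UNIV q" using q(2)
    by (meson continuous_at_imp_continuous_on has_derivative_continuous)
  show ?case
    by (rule exI[of _ "\<lambda>z. p z *\<^sub>R Gq z + q z *\<^sub>R Gp z"])
       (auto intro!: derivative_eq_intros p q cp cq continuous_intros simp: inner_add_left algebra_simps)
qed

lemma grad_eqI:
  assumes "(f has_derivative (\<lambda>h. inner v h)) (at z)"
  shows "grad f z = v"
proof -
  have "(f has_derivative (\<lambda>h. inner (grad f z) h)) (at z)"
    unfolding grad_def by (rule someI[of _ v]) (rule assms)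
  then have "(\<lambda>h. inner (grad f z) h) = (\<lambda>h. inner v h)"
    using assms has_derivative_unique by blast
  then have "inner (grad f z - v) (grad f z - v) = 0"
    by (metis inner_diff_left right_minus_eq)
  then show ?thesis by simp
qed

lemma lin_repr:
  fixes D :: "'a::euclidean_space \<Rightarrow> real"
  assumes "linear D"
  shows "\<exists>w. \<forall>h. D h = w \<bullet> h"
proof (intro exI allI)
  fix h
  have "D h = D (\<Sum>b\<in>Basis. (h \<bullet> b) *\<^sub>R b)" by (simp add: euclidean_representation)
  also have "\<dots> = (\<Sum>b\<in>Basis. (h \<bullet> b) * D b)"
    using assms by (simp add: linear_sum linear_scale)
  also have "\<dots> = (\<Sum>b\<in>Basis. D b *\<^sub>R b) \<bullet> h"
    by (simp add: inner_sum_left inner_sum_right inner_commute mult.commute)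
  finally show "D h = (\<Sum>b\<in>Basis. D b *\<^sub>R b) \<bullet> h" .
qed

lemma dual_vectors:
  fixes a :: "nat \<Rightarrow> 'a::euclidean_space"
  assumes ind: "\<forall>c. (\<Sum>j<s. c j *\<^sub>R a j) = 0 \<longrightarrow> (\<forall>j<s. c j = 0)"
  shows "\<exists>c. \<forall>j<s. \<forall>k<s. a k \<bullet> c j = (if k = j then 1 else 0)"
proof -
  have inj: "inj_on a {..<s}"
  proof (rule inj_onI, rule ccontr)
    fix j k assume jk: "j \<in> {..<s}" "k \<in> {..<s}" "a j = a k" "j \<noteq> k"
    define c where "c i = (if i = j then 1 else if i = k then -1 else (0::real))" for i
    have "\<And>i. c i *\<^sub>R a i = (if i = j then a j else 0) - (if i = k then a k else 0)"
      using jk by (auto simp: c_def)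
    then have "(\<Sum>i<s. c i *\<^sub>R a i) = (\<Sum>i<s. (if i = j then a j else 0)) - (\<Sum>i<s. (if i = k then a k else 0))"
      by (simp add: sum_subtractf)
    also have "\<dots> = 0" using jk by simp
    finally have "\<forall>i<s. c i = 0" using ind[rule_format, of c] by blast
    then show False using jk by (auto simp: c_def)
  qed
  have indep: "independent (a ` {..<s})"
  proof
    assume "dependent (a ` {..<s})"
    then obtain u where u: "\<exists>v\<in>a ` {..<s}. u v \<noteq> 0" "(\<Sum>v\<in>a ` {..<s}. u v *\<^sub>R v) = 0"
      using real_vector.dependent_finite[of "a ` {..<s}"] by auto
    have "(\<Sum>j<s. u (a j) *\<^sub>R a j) = 0"
      using u(2) by (simp add: sum.reindex[OF inj])
    then have "\<forall>j<s. u (a j) = 0" using ind[rule_format, of "\<lambda>j. u (a j)"] by blast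
    then show False using u(1) by auto
  qed
  have ex: "\<forall>j. \<exists>c. j < s \<longrightarrow> (\<forall>k<s. a k \<bullet> c = (if k = j then 1 else 0))"
  proof (intro allI)
    fix j
    obtain l :: "'a \<Rightarrow> real" where l: "linear l" "\<forall>x\<in>a ` {..<s}. l x = (if x = a j then 1 else 0)"
      using real_vector.linear_independent_extend[OF indep, of "\<lambda>x. if x = a j then 1 else 0"] by blast
    obtain c where c: "\<forall>h. l h = c \<bullet> h" using lin_repr[OF l(1)] by blast
    show "\<exists>c. j < s \<longrightarrow> (\<forall>k<s. a k \<bullet> c = (if k = j then 1 else 0))"
    proof (intro exI[of _ c] impI allI)
      fix k assume "j < s" "k < s"
      then have "l (a k) = (if k = j then 1 else 0)"
        using l(2) inj \<open>k < s\<close> \<open>j < s\<close> unfolding inj_on_def by (metis imageI lessThan_iff)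
      then show "a k \<bullet> c = (if k = j then 1 else 0)" using c by (simp add: inner_commute)
    qed
  qed
  obtain c where "\<forall>j. j < s \<longrightarrow> (\<forall>k<s. a k \<bullet> c j = (if k = j then 1 else 0))"
    using choice[OF ex] by blast
  then show ?thesis by blast
qed

lemma sum_dual:
  fixes X :: "nat \<Rightarrow> real"
  assumes "\<forall>j<s. \<forall>k<s. a k \<bullet> c j = (if k = j then 1 else 0)" "k < s"
  shows "(\<Sum>j<s. X j * (a k \<bullet> c j)) = X k"
proof -
  have "(\<Sum>j<s. X j * (a k \<bullet> c j)) = (\<Sum>j<s. if k = j then X j else 0)"
    by (rule sum.cong) (use assms in auto)
  also have "\<dots> = X k" using assms(2) by simp
  finally show ?thesis .
qed

lemma feasible_dir:
  fixes g h :: "nat \<Rightarrow> real^'n \<Rightarrow> real" and Gg Gh :: "nat \<Rightarrow> real^'n \<Rightarrow> real^'n"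
    and f :: "real^'n \<Rightarrow> real"
  assumes dg: "\<And>i z. i < r \<Longrightarrow> (g i has_derivative (\<lambda>k. Gg i z \<bullet> k)) (at z)"
    and dh: "\<And>j z. j < s \<Longrightarrow> (h j has_derivative (\<lambda>k. Gh j z \<bullet> k)) (at z)"
    and ch: "\<And>j. j < s \<Longrightarrow> continuous_on UNIV (Gh j)"
    and y: "y \<in> feas_set r s g h"
    and ind: "\<forall>c. (\<Sum>j<s. c j *\<^sub>R Gh j y) = 0 \<longrightarrow> (\<forall>j<s. c j = 0)"
    and dact: "\<And>i. i < r \<Longrightarrow> g i y = 0 \<Longrightarrow> Gg i y \<bullet> d < 0"
    and deq: "\<And>j. j < s \<Longrightarrow> Gh j y \<bullet> d = 0"
    and df: "(f has_derivative (\<lambda>k. w0 \<bullet> k)) (at y)"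
    and mx: "\<And>z. z \<in> feas_set r s g h \<Longrightarrow> f z \<le> f y"
  shows "w0 \<bullet> d \<le> 0"
proof -
  obtain c where c: "\<forall>j<s. \<forall>k<s. Gh k y \<bullet> c j = (if k = j then 1 else 0)"
    using dual_vectors[OF ind] by blast
  define \<Phi> where "\<Phi> z = (z - y) - (\<Sum>j<s. (Gh j y \<bullet> (z - y)) *\<^sub>R c j) + (\<Sum>j<s. h j z *\<^sub>R c j)" for z
  define L where "L z w = w - (\<Sum>j<s. (Gh j y \<bullet> w) *\<^sub>R c j) + (\<Sum>j<s. (Gh j z \<bullet> w) *\<^sub>R c j)" for z w
  have bl: "bounded_linear (L z)" for z
    unfolding L_def by (auto intro!: bounded_linear_intros)
  define f' where "f' z = Blinfun (L z)" for z
  have f'a: "blinfun_apply (f' z) = L z" for z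
    using bl by (simp add: f'_def bounded_linear_Blinfun_apply)
  have dPhi: "(\<Phi> has_derivative blinfun_apply (f' z)) (at z)" for z
    unfolding f'a L_def \<Phi>_def [abs_def]
    by (auto intro!: derivative_eq_intros dh)
  have cf': "continuous_on UNIV f'"
    by (rule continuous_on_blinfun_componentwise) (auto simp: f'a L_def intro!: continuous_intros ch)
  have f'y: "f' y = id_blinfun"
    by (rule blinfun_eqI) (simp add: f'a L_def)
  have inv: "id_blinfun o\<^sub>L f' y = id_blinfun"
    by (rule blinfun_eqI) (simp add: f'y)
  obtain U' V ginv g' where U': "open U'" "y \<in> U'" and V: "open V" "\<Phi> y \<in> V"
    and hom: "homeomorphism U' V \<Phi> ginv"
    and dg': "\<And>w. w \<in> V \<Longrightarrow> (ginv has_derivative (g' w)) (at w)"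
    and g'e: "\<And>w. w \<in> V \<Longrightarrow> g' w = inv (blinfun_apply (f' (ginv w)))"
    using inverse_function_theorem[OF open_UNIV dPhi cf' UNIV_I[of y] inv] by metis
  have Phiy: "\<Phi> y = 0" using y by (simp add: \<Phi>_def feas_set_def)
  have g0: "ginv 0 = y"
    using hom U'(2) Phiy unfolding homeomorphism_def by metis
  have g'0: "g' 0 = id"
    using g'e[of 0] V(2) Phiy g0 f'y by (simp add: id_def)
  have dg0: "(ginv has_derivative id) (at 0)"
    using dg'[of 0] V(2) Phiy g'0 by simp
  define z where "z t = ginv (t *\<^sub>R d)" for t :: real
  have z0: "z 0 = y" by (simp add: z_def g0)
  have dz: "(z has_derivative (\<lambda>t. t *\<^sub>R d)) (at 0)"
  proof -
    have "((ginv \<circ> (\<lambda>t. t *\<^sub>R d)) has_derivative (id \<circ> (\<lambda>t. t *\<^sub>R d))) (at 0)"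
      by (rule diff_chain_at) (auto intro!: derivative_eq_intros simp: dg0)
    then show ?thesis unfolding z_def[abs_def] by (simp add: o_def)
  qed
  have evV: "eventually (\<lambda>t. t *\<^sub>R d \<in> V) (at_right (0::real))"
  proof -
    have "((\<lambda>t::real. t *\<^sub>R d) \<longlongrightarrow> 0 *\<^sub>R d) (at_right 0)"
      by (intro tendsto_intros)
    then show ?thesis using V Phiy by (simp add: tendsto_def)
  qed
  have hz: "h k (z t) = 0" if "t *\<^sub>R d \<in> V" "k < s" for t k
  proof -
    have Pz: "\<Phi> (z t) = t *\<^sub>R d"
      using hom that(1) unfolding homeomorphism_def z_def by blast
    have "Gh k y \<bullet> \<Phi> (z t) = h k (z t)"
      by (simp add: \<Phi>_def inner_diff_right inner_add_right inner_sum_right sum_dual[OF c that(2)])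
    then show ?thesis using Pz deq[OF that(2)] by simp
  qed
  have Dq: "((\<lambda>t. q (z t)) has_real_derivative (G \<bullet> d)) (at 0)"
    if "(q has_derivative (\<lambda>k. G \<bullet> k)) (at y)" for q G
  proof -
    have "((q \<circ> z) has_derivative ((\<lambda>k. G \<bullet> k) \<circ> (\<lambda>t. t *\<^sub>R d))) (at 0)"
      by (rule diff_chain_at[OF dz]) (simp add: z0 that)
    moreover have "((\<lambda>k. G \<bullet> k) \<circ> (\<lambda>t. t *\<^sub>R d)) = (*) (G \<bullet> d)"
      by (auto simp: fun_eq_iff mult.commute)
    ultimately show ?thesis by (simp add: has_field_derivative_def o_def)
  qed
  have evg: "eventually (\<lambda>t. g i (z t) \<le> 0) (at_right 0)" if "i < r" for i
  proof (cases "g i y = 0")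
    case True
    have "\<exists>e>0. \<forall>t>0. t < e \<longrightarrow> g i (z 0) > g i (z (0 + t))"
      by (rule DERIV_neg_dec_right[OF Dq[OF dg[OF that]] dact[OF that True]])
    then show ?thesis using True z0 by (auto simp: eventually_at_right_field intro: less_imp_le)
  next
    case False
    then have neg: "g i y < 0" using y that by (auto simp: feas_set_def)
    have "isCont (\<lambda>t. g i (z t)) 0"
      using Dq[OF dg[OF that]] by (rule DERIV_isCont)
    then have "((\<lambda>t. g i (z t)) \<longlongrightarrow> g i y) (at 0)"
      by (simp add: isCont_def z0)
    then have "eventually (\<lambda>t. g i (z t) < 0) (at 0)"
      using neg by (rule order_tendstoD)
    then have "eventually (\<lambda>t. g i (z t) < 0) (at_right 0)"
      by (simp add: eventually_at_split)
    then show ?thesis by (rule eventually_mono) simp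
  qed
  have evfeas: "eventually (\<lambda>t. z t \<in> feas_set r s g h) (at_right 0)"
  proof -
    have "eventually (\<lambda>t. \<forall>i\<in>{..<r}. g i (z t) \<le> 0) (at_right 0)"
      using evg by (intro eventually_ball_finite) auto
    then show ?thesis using evV
      by eventually_elim (auto simp: feas_set_def hz)
  qed
  show ?thesis
  proof (rule ccontr)
    assume "\<not> w0 \<bullet> d \<le> 0"
    then have "w0 \<bullet> d > 0" by simp
    from DERIV_pos_inc_right[OF Dq[OF df] this]
    have "eventually (\<lambda>t. f (z 0) < f (z t)) (at_right 0)"
      by (auto simp: eventually_at_right_field)
    with evfeas have "eventually (\<lambda>t. False) (at_right (0::real))"
      by eventually_elim (use mx z0 in force)
    then show False by simp
  qed
qed

theorem lemma3p4:
  fixes F :: "real ^ 'n \<Rightarrow> real ^ 'n"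
    and g h :: "nat \<Rightarrow> real ^ 'n \<Rightarrow> real"
    and r s :: nat and \<rho> :: real
    and \<phi> :: "real ^ 'n \<Rightarrow> real ^ 'n \<Rightarrow> real"
    and \<psi> :: "real ^ 'n \<Rightarrow> real"
    and \<Omega> :: "(real ^ 'n) set"
    and x y :: "real ^ 'n"
  assumes F_poly: "\<forall>k. real_poly_fun (\<lambda>z. F z $ k)"
    and g_poly: "\<forall>i<r. real_poly_fun (g i)"
    and h_poly: "\<forall>j<s. real_poly_fun (h j)"
    and Omega_def: "\<Omega> = feas_set r s g h"
    and Omega_ne: "\<Omega> \<noteq> {}"
    and rho_pos: "\<rho> > 0"
    and phi_def: "\<forall>a b. \<phi> a b = inner (F a) (a - b) - \<rho> / 2 * (norm (a - b))\<^sup>2"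
    and psi_def: "\<forall>a. \<psi> a = (SUP b\<in>\<Omega>. \<phi> a b)"
    and mfcq: "MFCQ r s g h"
    and y_in: "y \<in> {b \<in> \<Omega>. \<psi> x = \<phi> x b}"
  shows "fsubdiff (\<lambda>z. - \<psi> z) x \<subseteq>
     {v. (v, 0) \<in> {- grad (\<lambda>p. \<phi> (fst p) (snd p)) (x, y) + (0, w) | w. w \<in> normal_cone r s g h y}}"
proof
  fix v assume vsub: "v \<in> fsubdiff (\<lambda>z. - \<psi> z) x"
  have yO: "y \<in> \<Omega>" and psixy: "\<psi> x = \<phi> x y" using y_in by auto
  have exg: "\<forall>i. \<exists>G. i < r \<longrightarrow> continuous_on UNIV G \<and> (\<forall>z. (g i has_derivative (\<lambda>k. G z \<bullet> k)) (at z))"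
  proof (intro allI)
    fix i
    show "\<exists>G. i < r \<longrightarrow> continuous_on UNIV G \<and> (\<forall>z. (g i has_derivative (\<lambda>k. G z \<bullet> k)) (at z))"
      using poly_grad[of "g i"] g_poly by (cases "i < r") auto
  qed
  obtain Gg where GgQ: "\<forall>i. i < r \<longrightarrow> continuous_on UNIV (Gg i) \<and> (\<forall>z. (g i has_derivative (\<lambda>k. Gg i z \<bullet> k)) (at z))"
    using choice[OF exg] by blast
  have Gg: "\<And>i. i < r \<Longrightarrow> continuous_on UNIV (Gg i)"
    "\<And>i z. i < r \<Longrightarrow> (g i has_derivative (\<lambda>k. Gg i z \<bullet> k)) (at z)"
    using GgQ by auto
  have exh: "\<forall>j. \<exists>G. j < s \<longrightarrow> continuous_on UNIV G \<and> (\<forall>z. (h j has_derivative (\<lambda>k. G z \<bullet> k)) (at z))"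
  proof (intro allI)
    fix j
    show "\<exists>G. j < s \<longrightarrow> continuous_on UNIV G \<and> (\<forall>z. (h j has_derivative (\<lambda>k. G z \<bullet> k)) (at z))"
      using poly_grad[of "h j"] h_poly by (cases "j < s") auto
  qed
  obtain Gh where GhQ: "\<forall>j. j < s \<longrightarrow> continuous_on UNIV (Gh j) \<and> (\<forall>z. (h j has_derivative (\<lambda>k. Gh j z \<bullet> k)) (at z))"
    using choice[OF exh] by blast
  have Gh: "\<And>j. j < s \<Longrightarrow> continuous_on UNIV (Gh j)"
    "\<And>j z. j < s \<Longrightarrow> (h j has_derivative (\<lambda>k. Gh j z \<bullet> k)) (at z)"
    using GhQ by auto
  have exF: "\<forall>m. \<exists>G. \<forall>z. ((\<lambda>z. F z $ m) has_derivative (\<lambda>k. G z \<bullet> k)) (at z)"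
  proof (intro allI)
    fix m
    show "\<exists>G. \<forall>z. ((\<lambda>z. F z $ m) has_derivative (\<lambda>k. G z \<bullet> k)) (at z)"
      using poly_grad[of "\<lambda>z. F z $ m"] F_poly by auto
  qed
  obtain GF where GFQ: "\<forall>m. \<forall>z. ((\<lambda>z. F z $ m) has_derivative (\<lambda>k. GF m z \<bullet> k)) (at z)"
    using choice[OF exF] by blast
  have GF: "\<And>m z. ((\<lambda>z. F z $ m) has_derivative (\<lambda>k. GF m z \<bullet> k)) (at z)"
    using GFQ by auto
  have gradg: "grad (g i) z = Gg i z" if "i < r" for i z using Gg(2)[OF that] by (rule grad_eqI)
  have gradh: "grad (h j) z = Gh j z" if "j < s" for j z using Gh(2)[OF that] by (rule grad_eqI)
  have dF: "(F has_derivative (\<lambda>k. \<chi> m. GF m x \<bullet> k)) (at x)"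
    by (rule iffD2[OF has_derivative_componentwise_within]) (auto simp: Basis_vec_def inner_axis GF)
  define P where "P p = inner (F (fst p)) (fst p - snd p) - \<rho> / 2 * inner (fst p - snd p) (fst p - snd p)" for p
  have Pphi: "(\<lambda>p. \<phi> (fst p) (snd p)) = P"
    by (auto simp: fun_eq_iff P_def phi_def power2_norm_eq_inner)
  have dFf: "((\<lambda>p. F (fst p)) has_derivative (\<lambda>q. (\<chi> m. GF m x \<bullet> fst q))) (at (x, y))"
    using has_derivative_compose[OF has_derivative_fst[OF has_derivative_ident[of "at (x, y)"]], of F] dF
    by simp
  have "\<exists>D. (P has_derivative D) (at (x, y))"
    unfolding P_def [abs_def]
    apply (rule exI)
    apply (rule has_derivative_diff)
     apply (rule has_derivative_inner[OF dFf])
     apply (rule has_derivative_diff[OF has_derivative_fst[OF has_derivative_ident] has_derivative_snd[OF has_derivative_ident]])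
    apply (rule has_derivative_mult_right)
    apply (rule has_derivative_inner)
     apply (rule has_derivative_diff[OF has_derivative_fst[OF has_derivative_ident] has_derivative_snd[OF has_derivative_ident]])
    apply (rule has_derivative_diff[OF has_derivative_fst[OF has_derivative_ident] has_derivative_snd[OF has_derivative_ident]])
    done
  then obtain D where dP: "(P has_derivative D) (at (x, y))" by blast
  then have "linear D" using has_derivative_linear by blast
  then obtain w where w: "\<And>p. D p = w \<bullet> p" using lin_repr by blast
  have dPw: "(P has_derivative (\<lambda>p. w \<bullet> p)) (at (x, y))" using dP w by (metis (no_types) ext)
  have gradP: "grad (\<lambda>p. \<phi> (fst p) (snd p)) (x, y) = w"
    unfolding Pphi by (rule grad_eqI[OF dPw])
  obtain wx wy where wxy: "w = (wx, wy)" by (cases w)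
  have Pab: "P (a, b) = \<phi> a b" for a b by (simp add: Pphi[symmetric])
  have bdd: "bdd_above ((\<phi> a) ` \<Omega>)" for a
  proof (rule bdd_aboveI2)
    fix b
    have cs: "inner (F a) (a - b) \<le> norm (F a) * norm (a - b)" by (rule norm_cauchy_schwarz)
    have "0 \<le> (norm (F a) - \<rho> * norm (a - b))^2" by simp
    then have "norm (F a) * norm (a - b) - \<rho> / 2 * (norm (a - b))\<^sup>2 \<le> (norm (F a))^2 / (2 * \<rho>)"
      using rho_pos by (simp add: field_simps power2_eq_square)
    then show "\<phi> a b \<le> (norm (F a))^2 / (2 * \<rho>)" using cs phi_def by simp
  qed
  have phi_le: "\<phi> a b \<le> \<psi> a" if "b \<in> \<Omega>" for a b
    using cSUP_upper[OF that bdd] psi_def by simp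
  have dPy: "((\<lambda>b. P (x, b)) has_derivative (\<lambda>k. wy \<bullet> k)) (at y)"
  proof -
    have "((\<lambda>b. P (x, b)) has_derivative (\<lambda>k. w \<bullet> (0, k))) (at y)"
      using has_derivative_compose[OF has_derivative_Pair[OF has_derivative_const has_derivative_ident], of P "\<lambda>p. w \<bullet> p" x y] dPw
      by simp
    then show ?thesis by (simp add: wxy)
  qed
  have dPx: "((\<lambda>t. P (x + t *\<^sub>R u, y)) has_real_derivative (wx \<bullet> u)) (at 0)" for u
  proof -
    have "((\<lambda>t. (x + t *\<^sub>R u, y)) has_derivative (\<lambda>t. (t *\<^sub>R u, 0))) (at (0::real))"
      by (auto intro!: derivative_eq_intros)
    from has_derivative_compose[OF this, of P "\<lambda>p. w \<bullet> p"] dPw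
    have "((\<lambda>t. P (x + t *\<^sub>R u, y)) has_derivative (\<lambda>t. w \<bullet> (t *\<^sub>R u, 0))) (at 0)"
      by simp
    moreover have "(\<lambda>t. w \<bullet> (t *\<^sub>R u, 0)) = (*) (wx \<bullet> u)"
      by (auto simp: fun_eq_iff wxy)
    ultimately show ?thesis by (simp add: has_field_derivative_def)
  qed
  have vwx: "v = - wx"
  proof (rule ccontr)
    assume "v \<noteq> - wx"
    define u where "u = wx + v"
    have "u \<noteq> 0" using \<open>v \<noteq> - wx\<close> unfolding u_def by (metis add.commute add_eq_0_iff)
    then have nu: "norm u > 0" by simp
    have lt: "ereal (- norm u / 2) < 0" using nu by (simp add: zero_ereal_def)
    have liminf: "0 \<le> Liminf (at 0) (\<lambda>k. ereal ((- \<psi> (x + k) - - \<psi> x - v \<bullet> k) / norm k))"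
      using vsub by (simp add: fsubdiff_def)
    have "eventually (\<lambda>k. ereal (- norm u / 2) < ereal ((- \<psi> (x + k) - - \<psi> x - v \<bullet> k) / norm k)) (at 0)"
      using le_Liminf_iff[THEN iffD1, rule_format, OF liminf lt] .
    then have ev1: "eventually (\<lambda>k. - norm u / 2 < (- \<psi> (x + k) - - \<psi> x - v \<bullet> k) / norm k) (at 0)"
      by simp
    have lim: "filterlim (\<lambda>t. t *\<^sub>R u) (at 0) (at_right (0::real))"
    proof -
      have "((\<lambda>t. t *\<^sub>R u) \<longlongrightarrow> 0 *\<^sub>R u) (at_right (0::real))" by (intro tendsto_intros)
      moreover have "eventually (\<lambda>t. t *\<^sub>R u \<noteq> 0) (at_right (0::real))"
        using eventually_at_right_less[of "0::real"] by eventually_elim (use \<open>u \<noteq> 0\<close> in auto)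
      ultimately show ?thesis by (simp add: filterlim_at)
    qed
    have ev2: "eventually (\<lambda>t. - norm u / 2 < (- \<psi> (x + t *\<^sub>R u) - - \<psi> x - v \<bullet> (t *\<^sub>R u)) / norm (t *\<^sub>R u)) (at_right 0)"
      using eventually_compose_filterlim[OF ev1 lim] .
    define q where "q t = P (x + t *\<^sub>R u, y)" for t
    have "((\<lambda>t. (q (0 + t) - q 0) / t) \<longlongrightarrow> wx \<bullet> u) (at 0)"
      using dPx[of u] unfolding DERIV_def q_def by simp
    moreover have "wx \<bullet> u = norm u ^ 2 - v \<bullet> u"
      by (simp add: u_def power2_norm_eq_inner inner_add_left inner_commute)
    ultimately have "eventually (\<lambda>t. (q t - q 0) / t > norm u ^ 2 / 2 - v \<bullet> u) (at 0)"
      using nu by (intro order_tendstoD(1)) (auto simp: power2_eq_square)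
    then have ev3: "eventually (\<lambda>t. (q t - q 0) / t > norm u ^ 2 / 2 - v \<bullet> u) (at_right 0)"
      by (simp add: eventually_at_split)
    have "eventually (\<lambda>t::real. False) (at_right 0)"
      using ev2 ev3 eventually_at_right_less[of "0::real"]
    proof eventually_elim
      case (elim t)
      have le: "- \<psi> (x + t *\<^sub>R u) - - \<psi> x \<le> - (q t - q 0)"
        using phi_le[OF yO, of "x + t *\<^sub>R u"] psixy by (simp add: q_def Pab)
      have nt: "norm (t *\<^sub>R u) = t * norm u" using elim(3) by simp
      have "(- \<psi> (x + t *\<^sub>R u) - - \<psi> x - v \<bullet> (t *\<^sub>R u)) / norm (t *\<^sub>R u)
          \<le> (- (q t - q 0) - t * (v \<bullet> u)) / (t * norm u)"
        unfolding nt using le elim(3) nu by (intro divide_right_mono) auto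
      also have "\<dots> = (- ((q t - q 0) / t) - v \<bullet> u) / norm u"
        using elim(3) nu by (simp add: field_simps)
      also have "\<dots> < (- (norm u ^ 2 / 2 - v \<bullet> u) - v \<bullet> u) / norm u"
        using elim(2) nu by (intro divide_strict_right_mono) auto
      also have "\<dots> = - norm u / 2"
        using nu by (simp add: field_simps power2_eq_square)
      finally show False using elim(1) by simp
    qed
    then show False by simp
  qed
  have wyN: "wy \<in> normal_cone r s g h y"
  proof -
    have yF: "y \<in> feas_set r s g h" using yO Omega_def by simp
    have sumh: "(\<Sum>j<s. c j *\<^sub>R grad (h j) y) = (\<Sum>j<s. c j *\<^sub>R Gh j y)" for c
      by (rule sum.cong) (auto simp: gradh)
    have sumg: "(\<Sum>i<r. c i *\<^sub>R grad (g i) y) = (\<Sum>i<r. c i *\<^sub>R Gg i y)" for c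
      by (rule sum.cong) (auto simp: gradg)
    have ind: "\<forall>c. (\<Sum>j<s. c j *\<^sub>R Gh j y) = 0 \<longrightarrow> (\<forall>j<s. c j = 0)"
    proof -
      have "\<forall>c. (\<Sum>j<s. c j *\<^sub>R grad (h j) y) = 0 \<longrightarrow> (\<forall>j<s. c j = 0)"
        using mfcq yF unfolding MFCQ_def by blast
      then show ?thesis by (simp only: sumh)
    qed
    have "\<exists>v. (\<forall>i<r. g i y = 0 \<longrightarrow> grad (g i) y \<bullet> v < 0) \<and> (\<forall>j<s. grad (h j) y \<bullet> v = 0)"
      using bspec[OF mfcq[unfolded MFCQ_def] yF] by blast
    then obtain v0 where v0g: "\<And>i. i < r \<Longrightarrow> g i y = 0 \<Longrightarrow> Gg i y \<bullet> v0 < 0"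
      and v0h: "\<And>j. j < s \<Longrightarrow> Gh j y \<bullet> v0 = 0"
      by (auto simp: gradg gradh)
    have mx: "P (x, z) \<le> P (x, y)" if "z \<in> feas_set r s g h" for z
      using phi_le[of z x] that Omega_def psixy by (simp add: Pab)
    have B1: "wy \<bullet> d \<le> 0" if "\<And>i. i < r \<Longrightarrow> g i y = 0 \<Longrightarrow> Gg i y \<bullet> d < 0"
      "\<And>j. j < s \<Longrightarrow> Gh j y \<bullet> d = 0" for d
      by (rule feasible_dir[OF Gg(2) Gh(2) Gh(1) yF ind that dPy mx]) auto
    have B2: "wy \<bullet> d \<le> 0" if dg: "\<And>i. i < r \<Longrightarrow> g i y = 0 \<Longrightarrow> Gg i y \<bullet> d \<le> 0"
      and dh: "\<And>j. j < s \<Longrightarrow> Gh j y \<bullet> d = 0" for d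
    proof (rule ccontr)
      assume "\<not> wy \<bullet> d \<le> 0"
      then have pos: "wy \<bullet> d > 0" by simp
      define e where "e = (wy \<bullet> d) / (2 * (\<bar>wy \<bullet> v0\<bar> + 1))"
      have e: "e > 0" using pos by (simp add: e_def)
      have "wy \<bullet> (d + e *\<^sub>R v0) \<le> 0"
      proof (rule B1)
        fix i assume "i < r" "g i y = 0"
        then show "Gg i y \<bullet> (d + e *\<^sub>R v0) < 0"
          using dg[of i] v0g[of i] e by (simp add: inner_add_right mult_pos_neg add_nonpos_neg)
      next
        fix j assume "j < s"
        then show "Gh j y \<bullet> (d + e *\<^sub>R v0) = 0"
          using dh[of j] v0h[of j] by (simp add: inner_add_right)
      qed
      then have le: "wy \<bullet> d + e * (wy \<bullet> v0) \<le> 0" by (simp add: inner_add_right)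
      have "e * \<bar>wy \<bullet> v0\<bar> \<le> (wy \<bullet> d) / 2"
      proof -
        have "e * \<bar>wy \<bullet> v0\<bar> \<le> e * (\<bar>wy \<bullet> v0\<bar> + 1)" using e by simp
        also have "\<dots> = (wy \<bullet> d) / 2" by (simp add: e_def field_simps)
        finally show ?thesis .
      qed
      moreover have "- (e * \<bar>wy \<bullet> v0\<bar>) \<le> e * (wy \<bullet> v0)"
        using e mult_left_mono[of "- \<bar>wy \<bullet> v0\<bar>" "wy \<bullet> v0" e] by simp
      ultimately show False using le pos by linarith
    qed
    define S where "S = (\<lambda>i. Gg i y) ` {i. i < r \<and> g i y = 0} \<union> (\<lambda>j. Gh j y) ` {..<s}
       \<union> (\<lambda>j. - Gh j y) ` {..<s} \<union> {0}"
    have finS: "finite S" by (simp add: S_def)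
    define C where "C = conic hull (convex hull S)"
    have closedC: "closed C" unfolding C_def
      using closed_conic_hull_strong[of "convex hull S"] finS unfolding polytope_def by blast
    have convC: "convex C" unfolding C_def by (simp add: convex_conic_hull)
    have conicC: "conic C" unfolding C_def by (simp add: conic_conic_hull)
    have SC: "S \<subseteq> C" unfolding C_def
      by (meson hull_subset subset_trans)
    have wyC: "wy \<in> C"
    proof (rule ccontr)
      assume "wy \<notin> C"
      then obtain a b where ab: "inner a wy < b" "\<forall>z\<in>C. inner a z > b"
        using separating_hyperplane_closed_point[OF convC closedC] by blast
      have "0 \<in> C" using SC by (auto simp: S_def)
      then have b0: "b < 0" using ab(2) by force
      have az: "inner a z \<ge> 0" if "z \<in> C" for z
      proof (rule ccontr)
        assume "\<not> inner a z \<ge> 0"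
        then have neg: "inner a z < 0" by simp
        define t where "t = 2 * b / inner a z"
        have t: "t \<ge> 0" using neg b0 by (simp add: t_def divide_nonpos_neg)
        have "t *\<^sub>R z \<in> C" using conicC that t by (simp add: conic_def)
        then have "inner a (t *\<^sub>R z) > b" using ab(2) by blast
        moreover have "inner a (t *\<^sub>R z) = 2 * b" using neg by (simp add: t_def)
        ultimately show False using b0 by simp
      qed
      have "wy \<bullet> (- a) \<le> 0"
      proof (rule B2)
        fix i assume "i < r" "g i y = 0"
        then have "Gg i y \<in> C" using SC by (auto simp: S_def)
        then show "Gg i y \<bullet> (- a) \<le> 0" using az[of "Gg i y"] by (simp add: inner_commute)
      next
        fix j assume "j < s"
        then have "Gh j y \<in> C" "- Gh j y \<in> C" using SC by (auto simp: S_def)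
        then show "Gh j y \<bullet> (- a) = 0" using az[of "Gh j y"] az[of "- Gh j y"]
          by (simp add: inner_commute)
      qed
      then show False using ab(1) b0 by (simp add: inner_commute)
    qed
    define N where "N = {(\<Sum>i<r. \<mu> i *\<^sub>R Gg i y) + (\<Sum>j<s. \<kappa> j *\<^sub>R Gh j y) | \<mu> \<kappa>.
        (\<forall>i<r. \<mu> i \<ge> 0 \<and> \<mu> i * g i y = 0)}"
    have NN: "N \<subseteq> normal_cone r s g h y"
      unfolding N_def normal_cone_def sumg sumh by blast
    have convN: "convex N"
      unfolding convex_def
    proof (intro ballI allI impI)
      fix p q :: "real^'n" and a b :: real
      assume "p \<in> N" "q \<in> N" "0 \<le> a" "0 \<le> b" "a + b = 1"
      then obtain \<mu>1 \<kappa>1 \<mu>2 \<kappa>2 where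
        p: "p = (\<Sum>i<r. \<mu>1 i *\<^sub>R Gg i y) + (\<Sum>j<s. \<kappa>1 j *\<^sub>R Gh j y)" "\<forall>i<r. \<mu>1 i \<ge> 0 \<and> \<mu>1 i * g i y = 0"
        and q: "q = (\<Sum>i<r. \<mu>2 i *\<^sub>R Gg i y) + (\<Sum>j<s. \<kappa>2 j *\<^sub>R Gh j y)" "\<forall>i<r. \<mu>2 i \<ge> 0 \<and> \<mu>2 i * g i y = 0"
        unfolding N_def by blast
      have "a *\<^sub>R p + b *\<^sub>R q = (\<Sum>i<r. (a * \<mu>1 i + b * \<mu>2 i) *\<^sub>R Gg i y) + (\<Sum>j<s. (a * \<kappa>1 j + b * \<kappa>2 j) *\<^sub>R Gh j y)"
        unfolding p q by (simp add: scaleR_add_right scaleR_sum_right scaleR_add_left sum.distrib)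
      moreover have "\<forall>i<r. a * \<mu>1 i + b * \<mu>2 i \<ge> 0 \<and> (a * \<mu>1 i + b * \<mu>2 i) * g i y = 0"
        using p(2) q(2) \<open>0 \<le> a\<close> \<open>0 \<le> b\<close> by (auto simp: distrib_right)
      ultimately show "a *\<^sub>R p + b *\<^sub>R q \<in> N" unfolding N_def mem_Collect_eq
        by (intro exI[of _ "\<lambda>i. a * \<mu>1 i + b * \<mu>2 i"] exI[of _ "\<lambda>j. a * \<kappa>1 j + b * \<kappa>2 j"]) simp
    qed
    have conicN: "conic N"
      unfolding conic_def
    proof (intro allI impI)
      fix p :: "real^'n" and a :: real
      assume "p \<in> N" "0 \<le> a"
      then obtain \<mu>1 \<kappa>1 where
        p: "p = (\<Sum>i<r. \<mu>1 i *\<^sub>R Gg i y) + (\<Sum>j<s. \<kappa>1 j *\<^sub>R Gh j y)" "\<forall>i<r. \<mu>1 i \<ge> 0 \<and> \<mu>1 i * g i y = 0"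
        unfolding N_def by blast
      have "a *\<^sub>R p = (\<Sum>i<r. (a * \<mu>1 i) *\<^sub>R Gg i y) + (\<Sum>j<s. (a * \<kappa>1 j) *\<^sub>R Gh j y)"
        unfolding p by (simp add: scaleR_add_right scaleR_sum_right)
      moreover have "\<forall>i<r. a * \<mu>1 i \<ge> 0 \<and> (a * \<mu>1 i) * g i y = 0"
        using p(2) \<open>0 \<le> a\<close> by simp
      ultimately show "a *\<^sub>R p \<in> N" unfolding N_def mem_Collect_eq
        by (intro exI[of _ "\<lambda>i. a * \<mu>1 i"] exI[of _ "\<lambda>j. a * \<kappa>1 j"]) simp
    qed
    have SN: "S \<subseteq> N"
    proof -
      have "Gg i y \<in> N" if "i < r" "g i y = 0" for i
      proof -
        have "Gg i y = (\<Sum>k<r. (if k = i then 1 else 0) *\<^sub>R Gg k y) + (\<Sum>j<s. 0 *\<^sub>R Gh j y)"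
          using that by (simp add: if_distrib[of "\<lambda>c. c *\<^sub>R _"] cong: if_cong)
        moreover have "\<forall>k<r. (if k = i then 1 else 0) \<ge> (0::real) \<and> (if k = i then 1 else 0) * g k y = 0"
          using that by simp
        ultimately show ?thesis unfolding N_def mem_Collect_eq
          by (intro exI[of _ "\<lambda>k. if k = i then 1 else 0"] exI[of _ "\<lambda>j. 0"]) simp
      qed
      moreover have "Gh j y \<in> N" if "j < s" for j
      proof -
        have "Gh j y = (\<Sum>k<r. 0 *\<^sub>R Gg k y) + (\<Sum>k<s. (if k = j then 1 else 0) *\<^sub>R Gh k y)"
          using that by (simp add: if_distrib[of "\<lambda>c. c *\<^sub>R _"] cong: if_cong)
        then show ?thesis unfolding N_def mem_Collect_eq
          by (intro exI[of _ "\<lambda>k. 0"] exI[of _ "\<lambda>k. if k = j then 1 else 0"]) simp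
      qed
      moreover have "- Gh j y \<in> N" if "j < s" for j
      proof -
        have "- Gh j y = (\<Sum>k<r. 0 *\<^sub>R Gg k y) + (\<Sum>k<s. (if k = j then -1 else 0) *\<^sub>R Gh k y)"
          using that by (simp add: if_distrib[of "\<lambda>c. c *\<^sub>R _"] cong: if_cong)
        then show ?thesis unfolding N_def mem_Collect_eq
          by (intro exI[of _ "\<lambda>k. 0"] exI[of _ "\<lambda>k. if k = j then -1 else 0"]) simp
      qed
      moreover have "(0::real^'n) \<in> N"
      proof -
        have "(0::real^'n) = (\<Sum>k<r. 0 *\<^sub>R Gg k y) + (\<Sum>k<s. 0 *\<^sub>R Gh k y)" by simp
        then show ?thesis unfolding N_def mem_Collect_eq
          by (intro exI[of _ "\<lambda>k. 0"] exI[of _ "\<lambda>k. 0"]) simp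
      qed
      ultimately show ?thesis unfolding S_def by blast
    qed
    have "convex hull S \<subseteq> N" using SN convN by (rule hull_minimal)
    then have "C \<subseteq> N" unfolding C_def using conicN by (rule hull_minimal)
    then show ?thesis using wyC NN by blast
  qed
  show "v \<in> {v. (v, 0) \<in> {- grad (\<lambda>p. \<phi> (fst p) (snd p)) (x, y) + (0, w) | w. w \<in> normal_cone r s g h y}}"
    using wyN by (auto simp: gradP wxy vwx intro!: exI[of _ wy])
qed

end
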